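(* For every $\alpha\in\mathbb{C}^3$ satisfying the triangle inequality, the Shilov boundary of $\overline{M_\alpha}$ with respect to the algebra $\mathcal{O}(M_\alpha)\cap\mathcal{C}(\overline{M_\alpha})$ is equal to $\overline{M_\alpha}\cap\mathbb{T}^3$.
   Context: $\mathbb{D}$ is the open unit disc, $\mathbb{T}$ the unit circle, $\overline{M_\alpha}$ the closure of $M_\alpha$ in $\mathbb{C}^3$. For $\alpha\in\mathbb{C}^3\setminus\{0\}$, $$M_\alpha=\{(z_1,z_2,z_3)\in\mathbb{D}^3:\ \alpha_1z_1+\alpha_2z_2+\alpha_3z_3=\overline{\alpha_1}z_2z_3+\overline{\alpha_2}z_1z_3+\overline{\alpha_3}z_1z_2\};$$ $\alpha$ satisfies the triangle inequality if $|\alpha_i|+|\alpha_j|>|\alpha_k|$ for every permutation $(i,j,k)$ of $(1,2,3)$. A function on $M_\alpha$ is holomorphic if it is locally the restriction of a holomorphic function on an open subset of $\mathbb{D}^3$; $\mathcal{O}(M_\alpha)\cap\mathcal{C}(\overline{M_\alpha})$ is the algebra of continuous functions on $\overline{M_\alpha}$ holomorphic on $M_\alpha$. The Shilov boundary is the smallest closed subset $\Gamma\subset\overline{M_\alpha}$ such that every function of the algebra attains its maximum modulus on $\Gamma$. *)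

theory Defs
  imports "HOL-Analysis.Analysis"
begin

type_synonym c3 = "complex \<times> complex \<times> complex"

definition polydisc3 :: "c3 set" where
  "polydisc3 = {(z1, z2, z3). norm z1 < 1 \<and> norm z2 < 1 \<and> norm z3 < 1}"

definition torus3 :: "c3 set" where
  "torus3 = {(z1, z2, z3). norm z1 = 1 \<and> norm z2 = 1 \<and> norm z3 = 1}"

definition M_alpha :: "complex \<Rightarrow> complex \<Rightarrow> complex \<Rightarrow> c3 set" where
  "M_alpha a1 a2 a3 = {(z1, z2, z3). (z1, z2, z3) \<in> polydisc3 \<and>
      a1 * z1 + a2 * z2 + a3 * z3 = cnj a1 * z2 * z3 + cnj a2 * z1 * z3 + cnj a3 * z1 * z2}"

definition triangle_ineq :: "complex \<Rightarrow> complex \<Rightarrow> complex \<Rightarrow> bool" where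
  "triangle_ineq a1 a2 a3 \<longleftrightarrow>
     norm a1 + norm a2 > norm a3 \<and> norm a1 + norm a3 > norm a2 \<and> norm a2 + norm a3 > norm a1"

definition holomorphic3_on :: "(c3 \<Rightarrow> complex) \<Rightarrow> c3 set \<Rightarrow> bool" where
  "holomorphic3_on F U \<longleftrightarrow> (\<forall>z\<in>U. \<exists>D. (F has_derivative D) (at z) \<and>
      (\<forall>c v1 v2 v3. D (c * v1, c * v2, c * v3) = c * D (v1, v2, v3)))"

definition holomorphic_on_subvariety :: "(c3 \<Rightarrow> complex) \<Rightarrow> c3 set \<Rightarrow> bool" where
  "holomorphic_on_subvariety f M \<longleftrightarrow> (\<forall>p\<in>M. \<exists>U F. open U \<and> p \<in> U \<and> U \<subseteq> polydisc3 \<and>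
      holomorphic3_on F U \<and> (\<forall>q\<in>U \<inter> M. F q = f q))"

definition hol_cont_algebra :: "c3 set \<Rightarrow> (c3 \<Rightarrow> complex) set" where
  "hol_cont_algebra M = {f. continuous_on (closure M) f \<and> holomorphic_on_subvariety f M}"

definition is_closed_boundary :: "('a::topological_space \<Rightarrow> complex) set \<Rightarrow> 'a set \<Rightarrow> 'a set \<Rightarrow> bool" where
  "is_closed_boundary A K G \<longleftrightarrow> G \<subseteq> K \<and> closed G \<and>
     (\<forall>f\<in>A. \<exists>x\<in>G. \<forall>y\<in>K. norm (f y) \<le> norm (f x))"

definition is_shilov_boundary :: "('a::topological_space \<Rightarrow> complex) set \<Rightarrow> 'a set \<Rightarrow> 'a set \<Rightarrow> bool" where
  "is_shilov_boundary A K G \<longleftrightarrow> is_closed_boundary A K G \<and>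
     (\<forall>G'. is_closed_boundary A K G' \<longrightarrow> G \<subseteq> G')"

end

theory Submission
  imports Defs "HOL-Complex_Analysis.Complex_Analysis"
begin

lemma normsq_identity1:
  fixes z a :: complex
  shows "(cmod (z + a))^2 - (cmod (1 + cnj a * z))^2 = ((cmod z)^2 - 1) * (1 - (cmod a)^2)"
proof -
  have "complex_of_real ((cmod (z + a))^2 - (cmod (1 + cnj a * z))^2)
        = complex_of_real (((cmod z)^2 - 1) * (1 - (cmod a)^2))"
    unfolding of_real_diff of_real_mult complex_norm_square of_real_1
    by (simp add: algebra_simps)
  then show ?thesis using of_real_eq_iff by blast
qed

lemma normsq_identity2:
  fixes c b u :: complex
  shows "(cmod (cnj c * u - b))^2 - (cmod (c - cnj b * u))^2 = ((cmod c)^2 - (cmod b)^2) * ((cmod u)^2 - 1)"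
proof -
  have "complex_of_real ((cmod (cnj c * u - b))^2 - (cmod (c - cnj b * u))^2)
        = complex_of_real (((cmod c)^2 - (cmod b)^2) * ((cmod u)^2 - 1))"
    unfolding of_real_diff of_real_mult complex_norm_square of_real_1
    by (simp add: algebra_simps)
  then show ?thesis using of_real_eq_iff by blast
qed

lemma unit_cnj: "cmod z = 1 \<Longrightarrow> z * cnj z = 1"
  by (metis complex_norm_square of_real_1 power_one)



definition EE :: "complex\<Rightarrow>complex\<Rightarrow>complex\<Rightarrow>complex\<Rightarrow>complex\<Rightarrow>complex\<Rightarrow>complex" where
  "EE a1 a2 a3 z1 z2 z3 = a1*z1+a2*z2+a3*z3 - cnj a1*z2*z3 - cnj a2*z1*z3 - cnj a3*z1*z2"

definition gooddisc :: "(complex \<Rightarrow> complex) \<Rightarrow> bool" where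
  "gooddisc w \<longleftrightarrow> w holomorphic_on ball 0 1 \<and> continuous_on (cball 0 1) w \<and> w 0 = 0 \<and>
     (\<forall>l\<in>ball 0 1. cmod (w l) < 1) \<and> (\<forall>l\<in>sphere 0 1. cmod (w l) = 1)"

lemma gooddisc_lin: "cmod z = 1 \<Longrightarrow> gooddisc (\<lambda>l. z * l)"
  unfolding gooddisc_def
  by (auto intro!: holomorphic_intros continuous_intros simp: norm_mult)

lemma lin_E:
  assumes "cmod z1 = 1" "cmod z2 = 1" "cmod z3 = 1" "b1*z1+b2*z2+b3*z3 = 0"
  shows "EE b1 b2 b3 (z1*l) (z2*l) (z3*l) = 0"
proof -
  have h1: "z1 * cnj z1 = 1" "z2 * cnj z2 = 1" "z3 * cnj z3 = 1" using assms unit_cnj by auto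
  have h2: "cnj b1 * cnj z1 + cnj b2 * cnj z2 + cnj b3 * cnj z3 = 0"
    using arg_cong[OF assms(4), of cnj] by simp
  show ?thesis unfolding EE_def using h1 h2 assms(4) by algebra
qed

lemma origin_disc3:
  assumes "cmod b1 \<le> cmod b3" "cmod b2 \<le> cmod b3"
  shows "\<exists>w1 w2 w3. gooddisc w1 \<and> gooddisc w2 \<and> gooddisc w3 \<and>
           (\<forall>l\<in>cball 0 1. EE b1 b2 b3 (w1 l) (w2 l) (w3 l) = 0)"
proof (cases "cmod b3 > \<bar>cmod b1 - cmod b2\<bar>")
  case True
  define z where "z = (if b1 = 0 \<or> b2 = 0 then 1 else -(b1 * of_real (cmod b2))/(b2 * of_real (cmod b1)))"
  define b where "b = b1 + b2 * z"
  have nz: "cmod z = 1"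
    unfolding z_def by (auto simp: norm_divide norm_mult)
  have nb: "cmod b = \<bar>cmod b1 - cmod b2\<bar>"
  proof (cases "b1 = 0 \<or> b2 = 0")
    case True then show ?thesis unfolding b_def z_def by auto
  next
    case False
    then have "b = b1 * of_real (1 - cmod b2 / cmod b1)"
      unfolding b_def z_def by (auto simp: field_simps)
    then have "cmod b = cmod b1 * \<bar>1 - cmod b2 / cmod b1\<bar>" by (simp only: norm_mult norm_of_real)
    also have "\<dots> = \<bar>cmod b1 * (1 - cmod b2 / cmod b1)\<bar>" by (simp add: abs_mult)
    also have "\<dots> = \<bar>cmod b1 - cmod b2\<bar>" using False by (simp add: right_diff_distrib)
    finally show ?thesis .
  qed
  have bc: "cmod b < cmod b3" using nb True by simp
  define w3 where "w3 = (\<lambda>l. l * (cnj b3 * (z * l) - b) / (b3 - cnj b * (z * l)))"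
  have den: "b3 - cnj b * (z * l) \<noteq> 0" if "cmod l \<le> 1" for l
  proof
    assume "b3 - cnj b * (z * l) = 0"
    then have "cmod b3 = cmod b * cmod l" by (simp add: norm_mult nz)
    also have "\<dots> \<le> cmod b" using that by (simp add: mult_left_le)
    finally show False using bc by simp
  qed
  have key: "(cmod (cnj b3 * (z*l) - b))^2 - (cmod (b3 - cnj b * (z*l)))^2
      = ((cmod b3)^2 - (cmod b)^2) * ((cmod l)^2 - 1)" for l
    using normsq_identity2[of b3 "z*l" b] by (simp add: norm_mult nz)
  have g3: "gooddisc w3"
    unfolding gooddisc_def
  proof (intro conjI ballI)
    show "w3 holomorphic_on ball 0 1" unfolding w3_def
      by (intro holomorphic_intros) (use den in auto)
    show "continuous_on (cball 0 1) w3" unfolding w3_def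
      by (intro continuous_intros) (use den in auto)
    show "w3 0 = 0" unfolding w3_def by simp
  next
    fix l :: complex assume l: "l \<in> ball 0 1"
    have "(cmod b3)^2 - (cmod b)^2 > 0" using bc
      by (simp add: power_strict_mono)
    moreover have "(cmod l)^2 - 1 < 0" using l by (simp add: power_less_one_iff)
    ultimately have "(cmod (cnj b3 * (z*l) - b))^2 < (cmod (b3 - cnj b * (z*l)))^2"
      using key[of l] by (smt (verit) mult_pos_neg)
    then have lt: "cmod (cnj b3 * (z*l) - b) < cmod (b3 - cnj b * (z*l))"
      using power_less_imp_less_base by fastforce
    have d: "cmod (b3 - cnj b * (z*l)) > 0" using den[of l] l by simp
    have "cmod (w3 l) = cmod l * (cmod (cnj b3 * (z*l) - b) / cmod (b3 - cnj b * (z*l)))"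
      unfolding w3_def by (simp add: norm_mult norm_divide)
    also have "\<dots> < 1"
    proof -
      have "cmod (cnj b3 * (z*l) - b) / cmod (b3 - cnj b * (z*l)) < 1" using lt d by simp
      moreover have "cmod l < 1" using l by simp
      moreover have "cmod l * (cmod (cnj b3 * (z*l) - b) / cmod (b3 - cnj b * (z*l)))
          \<le> 1 * (cmod (cnj b3 * (z*l) - b) / cmod (b3 - cnj b * (z*l)))"
        by (rule mult_right_mono) (use l in auto)
      ultimately show ?thesis by linarith
    qed
    finally show "cmod (w3 l) < 1" .
  next
    fix l :: complex assume l: "l \<in> sphere 0 1"
    then have "(cmod (cnj b3 * (z*l) - b))^2 = (cmod (b3 - cnj b * (z*l)))^2"
      using key[of l] by simp
    then have eq: "cmod (cnj b3 * (z*l) - b) = cmod (b3 - cnj b * (z*l))"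
      using power2_eq_iff_nonneg by fastforce
    have d: "cmod (b3 - cnj b * (z*l)) > 0" using den[of l] l by simp
    show "cmod (w3 l) = 1"
      unfolding w3_def using eq d l by (simp add: norm_mult norm_divide)
  qed
  have E0: "EE b1 b2 b3 (1 * l) (z * l) (w3 l) = 0" if "l \<in> cball 0 1" for l
  proof -
    have dl: "b3 - cnj b * (z * l) \<noteq> 0" using den that by simp
    have W: "w3 l * (b3 - cnj b * (z * l)) = l * (cnj b3 * (z * l) - b)"
      unfolding w3_def using dl by simp
    have hz: "z * cnj z = 1" using nz unit_cnj by blast
    have cb: "cnj b = cnj b1 + cnj b2 * cnj z" unfolding b_def by simp
    show ?thesis unfolding EE_def using W hz cb b_def by algebra
  qed
  show ?thesis
    by (rule exI[of _ "\<lambda>l. 1 * l"], rule exI[of _ "\<lambda>l. z * l"], rule exI[of _ w3])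
       (use gooddisc_lin[of 1] gooddisc_lin[OF nz] g3 E0 in auto)
next
  case False
  obtain z1 z2 z3 where zs: "cmod z1 = 1" "cmod z2 = 1" "cmod z3 = 1" "b1*z1+b2*z2+b3*z3 = 0"
  proof (cases "b3 = 0")
    case True
    then have "b1 = 0" "b2 = 0" using assms by auto
    then show ?thesis using that[of 1 1 1] True by simp
  next
    case b3: False
    show ?thesis
    proof (cases "cmod b2 \<le> cmod b1")
      case True
      then have "cmod b2 = 0" "cmod b1 = cmod b3" using False assms norm_ge_zero[of b2] by linarith+
      then have "b2 = 0" "cmod b1 = cmod b3" by auto
      then show ?thesis using that[of 1 1 "-b1/b3"] b3 by (simp add: norm_divide)
    next
      case f2: False
      then have "cmod b1 = 0" "cmod b2 = cmod b3" using False assms norm_ge_zero[of b1] by linarith+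
      then have "b1 = 0" "cmod b2 = cmod b3" by auto
      then show ?thesis using that[of 1 1 "-b2/b3"] b3 by (simp add: norm_divide)
    qed
  qed
  show ?thesis
    by (rule exI[of _ "\<lambda>l. z1 * l"], rule exI[of _ "\<lambda>l. z2 * l"], rule exI[of _ "\<lambda>l. z3 * l"])
       (use gooddisc_lin zs lin_E[OF zs] in auto)
qed



lemma EE_perm1: "EE b3 b2 b1 x y z = EE b1 b2 b3 z y x"
  by (simp add: EE_def algebra_simps)
lemma EE_perm2: "EE b1 b3 b2 x y z = EE b1 b2 b3 x z y"
  by (simp add: EE_def algebra_simps)

lemma origin_disc:
  "\<exists>w1 w2 w3. gooddisc w1 \<and> gooddisc w2 \<and> gooddisc w3 \<and>
     (\<forall>l\<in>cball 0 1. EE b1 b2 b3 (w1 l) (w2 l) (w3 l) = 0)"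
proof -
  consider "cmod b1 \<le> cmod b3 \<and> cmod b2 \<le> cmod b3"
    | "cmod b3 \<le> cmod b1 \<and> cmod b2 \<le> cmod b1"
    | "cmod b1 \<le> cmod b2 \<and> cmod b3 \<le> cmod b2" by linarith
  then show ?thesis
  proof cases
    case 1 then show ?thesis by (intro origin_disc3) auto
  next
    case 2
    have "\<exists>w1 w2 w3. gooddisc w1 \<and> gooddisc w2 \<and> gooddisc w3 \<and>
      (\<forall>l\<in>cball 0 1. EE b3 b2 b1 (w1 l) (w2 l) (w3 l) = 0)"
      using 2 by (intro origin_disc3) auto
    then obtain w1 w2 w3 where W: "gooddisc w1 \<and> gooddisc w2 \<and> gooddisc w3 \<and>
      (\<forall>l\<in>cball 0 1. EE b3 b2 b1 (w1 l) (w2 l) (w3 l) = 0)" by auto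
    show ?thesis
      by (rule exI[of _ w3], rule exI[of _ w2], rule exI[of _ w1]) (use W in \<open>simp add: EE_perm1\<close>)
  next
    case 3
    have "\<exists>w1 w2 w3. gooddisc w1 \<and> gooddisc w2 \<and> gooddisc w3 \<and>
      (\<forall>l\<in>cball 0 1. EE b1 b3 b2 (w1 l) (w2 l) (w3 l) = 0)"
      using 3 by (intro origin_disc3) auto
    then obtain w1 w2 w3 where W: "gooddisc w1 \<and> gooddisc w2 \<and> gooddisc w3 \<and>
      (\<forall>l\<in>cball 0 1. EE b1 b3 b2 (w1 l) (w2 l) (w3 l) = 0)" by auto
    show ?thesis
      by (rule exI[of _ w1], rule exI[of _ w3], rule exI[of _ w2]) (use W in \<open>simp add: EE_perm2\<close>)
  qed
qed

definition tau :: "complex \<Rightarrow> complex \<Rightarrow> complex" where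
  "tau a z = (z + a) / (1 + cnj a * z)"

lemma tau_den: "cmod a < 1 \<Longrightarrow> cmod z \<le> 1 \<Longrightarrow> 1 + cnj a * z \<noteq> 0"
proof
  assume "cmod a < 1" "cmod z \<le> 1" "1 + cnj a * z = 0"
  then have "cnj a * z = -1" by (metis add_diff_cancel_left' diff_0)
  then have "cmod a * cmod z = 1" by (metis complex_mod_cnj norm_minus_cancel norm_mult norm_one)
  moreover have "cmod a * cmod z \<le> cmod a * 1"
    by (rule mult_left_mono) (use \<open>cmod z \<le> 1\<close> in auto)
  moreover note \<open>cmod a < 1\<close>
  ultimately show False by simp
qed

lemma tau_lt: assumes "cmod a < 1" "cmod z < 1" shows "cmod (tau a z) < 1"
proof -
  have "(cmod (z + a))^2 - (cmod (1 + cnj a * z))^2 < 0"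
    unfolding normsq_identity1
    using assms by (simp add: mult_neg_pos power_less_one_iff)
  then have "cmod (z + a) < cmod (1 + cnj a * z)"
    using power_less_imp_less_base by fastforce
  moreover have "cmod (1 + cnj a * z) > 0" using tau_den assms by simp
  ultimately show ?thesis unfolding tau_def by (simp add: norm_divide)
qed

lemma tau_eq1: assumes "cmod a < 1" "cmod z = 1" shows "cmod (tau a z) = 1"
proof -
  have "(cmod (z + a))^2 - (cmod (1 + cnj a * z))^2 = 0"
    unfolding normsq_identity1 using assms by simp
  then have "cmod (z + a) = cmod (1 + cnj a * z)"
    using power2_eq_iff_nonneg by fastforce
  moreover have "cmod (1 + cnj a * z) > 0" using tau_den assms by simp
  ultimately show ?thesis unfolding tau_def by (simp add: norm_divide)
qed

lemma poly_identity0: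
  fixes a1 a2 a3 b1 b2 b3 p1 p2 p3 q1 q2 q3 w1 w2 w3 :: complex
  assumes h: "a1*p1+a2*p2+a3*p3 - b1*p2*p3 - b2*p1*p3 - b3*p1*p2 = 0"
  and h2: "b1*q1+b2*q2+b3*q3 - a1*q2*q3 - a2*q1*q3 - a3*q1*q2 = 0"
  shows "a1*(w1+p1)*(1+q2*w2)*(1+q3*w3) + a2*(w2+p2)*(1+q1*w1)*(1+q3*w3) + a3*(w3+p3)*(1+q1*w1)*(1+q2*w2)
   - b1*(w2+p2)*(w3+p3)*(1+q1*w1) - b2*(w1+p1)*(w3+p3)*(1+q2*w2) - b3*(w1+p1)*(w2+p2)*(1+q3*w3)
   = (1-p1*q1)*(a1 - b2*p3 - b3*p2)*w1 + (1-p2*q2)*(a2 - b1*p3 - b3*p1)*w2 + (1-p3*q3)*(a3 - b1*p2 - b2*p1)*w3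
    - (1-p1*q1)*(b1 - a2*q3 - a3*q2)*w2*w3 - (1-p2*q2)*(b2 - a1*q3 - a3*q1)*w1*w3 - (1-p3*q3)*(b3 - a1*q2 - a2*q1)*w1*w2"
  using h h2 by algebra

lemma mob_identity:
  fixes a1 a2 a3 p1 p2 p3 w1 w2 w3 :: complex
  defines "b1 \<equiv> (1-p1*cnj p1)*(a1 - cnj a2*p3 - cnj a3*p2)"
      and "b2 \<equiv> (1-p2*cnj p2)*(a2 - cnj a1*p3 - cnj a3*p1)"
      and "b3 \<equiv> (1-p3*cnj p3)*(a3 - cnj a1*p2 - cnj a2*p1)"
  assumes E: "EE a1 a2 a3 p1 p2 p3 = 0"
    and d: "1 + cnj p1 * w1 \<noteq> 0" "1 + cnj p2 * w2 \<noteq> 0" "1 + cnj p3 * w3 \<noteq> 0"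
  shows "EE a1 a2 a3 (tau p1 w1) (tau p2 w2) (tau p3 w3) * (1 + cnj p1 * w1) * (1 + cnj p2 * w2) * (1 + cnj p3 * w3)
     = EE b1 b2 b3 w1 w2 w3"
proof -
  have h: "a1*p1+a2*p2+a3*p3 - cnj a1*p2*p3 - cnj a2*p1*p3 - cnj a3*p1*p2 = 0"
    using E unfolding EE_def .
  have h2: "cnj a1*cnj p1+cnj a2*cnj p2+cnj a3*cnj p3 - a1*cnj p2*cnj p3 - a2*cnj p1*cnj p3 - a3*cnj p1*cnj p2 = 0"
    using arg_cong[OF h, of cnj] by simp
  define d1 d2 d3 where "d1 = 1 + cnj p1 * w1" and "d2 = 1 + cnj p2 * w2" and "d3 = 1 + cnj p3 * w3"
  define t1 t2 t3 where "t1 = tau p1 w1" and "t2 = tau p2 w2" and "t3 = tau p3 w3"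
  have t: "t1 * d1 = w1 + p1" "t2 * d2 = w2 + p2" "t3 * d3 = w3 + p3"
    using d unfolding t1_def t2_def t3_def d1_def d2_def d3_def tau_def by simp_all
  have "EE a1 a2 a3 t1 t2 t3 * d1 * d2 * d3 =
      a1*(t1*d1)*d2*d3 + a2*(t2*d2)*d1*d3 + a3*(t3*d3)*d1*d2
      - cnj a1*(t2*d2)*(t3*d3)*d1 - cnj a2*(t1*d1)*(t3*d3)*d2 - cnj a3*(t1*d1)*(t2*d2)*d3"
    unfolding EE_def by (simp add: algebra_simps)
  also have "\<dots> = (1-p1*cnj p1)*(a1 - cnj a2*p3 - cnj a3*p2)*w1 + (1-p2*cnj p2)*(a2 - cnj a1*p3 - cnj a3*p1)*w2 + (1-p3*cnj p3)*(a3 - cnj a1*p2 - cnj a2*p1)*w3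
    - (1-p1*cnj p1)*(cnj a1 - a2*cnj p3 - a3*cnj p2)*w2*w3 - (1-p2*cnj p2)*(cnj a2 - a1*cnj p3 - a3*cnj p1)*w1*w3 - (1-p3*cnj p3)*(cnj a3 - a1*cnj p2 - a2*cnj p1)*w1*w2"
    unfolding t unfolding d1_def d2_def d3_def by (rule poly_identity0[OF h h2])
  also have "\<dots> = EE b1 b2 b3 w1 w2 w3"
  proof -
    have cb: "cnj b1 = (1-p1*cnj p1)*(cnj a1 - a2*cnj p3 - a3*cnj p2)"
       "cnj b2 = (1-p2*cnj p2)*(cnj a2 - a1*cnj p3 - a3*cnj p1)"
       "cnj b3 = (1-p3*cnj p3)*(cnj a3 - a1*cnj p2 - a2*cnj p1)"
      unfolding b1_def b2_def b3_def by (simp_all add: algebra_simps)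
    show ?thesis unfolding EE_def cb unfolding b1_def b2_def b3_def by (rule refl)
  qed
  finally show ?thesis unfolding t1_def t2_def t3_def d1_def d2_def d3_def .
qed



definition gdisc :: "complex \<Rightarrow> (complex \<Rightarrow> complex) \<Rightarrow> bool" where
  "gdisc p g \<longleftrightarrow> g holomorphic_on ball 0 1 \<and> continuous_on (cball 0 1) g \<and> g 0 = p \<and>
     (\<forall>l\<in>ball 0 1. cmod (g l) < 1) \<and> (\<forall>l\<in>sphere 0 1. cmod (g l) = 1)"

lemma gooddisc_le: "gooddisc w \<Longrightarrow> l \<in> cball 0 1 \<Longrightarrow> cmod (w l) \<le> 1"
  unfolding gooddisc_def
  by (metis dist_0_norm less_eq_real_def mem_ball mem_cball mem_sphere)

lemma gdisc_tau:
  assumes p: "cmod p < 1" and w: "gooddisc w"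
  shows "gdisc p (\<lambda>l. tau p (w l))"
proof -
  have den: "1 + cnj p * w l \<noteq> 0" if "l \<in> cball 0 1" for l
    using tau_den[OF p gooddisc_le[OF w that]] .
  have hol: "w holomorphic_on ball 0 1" and cont: "continuous_on (cball 0 1) w" and w0: "w 0 = 0"
    and wb: "\<forall>l\<in>ball 0 1. cmod (w l) < 1" and ws: "\<forall>l\<in>sphere 0 1. cmod (w l) = 1"
    using w unfolding gooddisc_def by auto
  show ?thesis unfolding gdisc_def
  proof (intro conjI ballI)
    show "(\<lambda>l. tau p (w l)) holomorphic_on ball 0 1" unfolding tau_def
      by (intro holomorphic_intros hol) (use den in auto)
    show "continuous_on (cball 0 1) (\<lambda>l. tau p (w l))" unfolding tau_def
      by (intro continuous_intros cont) (use den in auto)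
    show "tau p (w 0) = p" unfolding tau_def w0 by simp
  next
    fix l :: complex assume "l \<in> ball 0 1"
    then show "cmod (tau p (w l)) < 1" using tau_lt[OF p] wb by auto
  next
    fix l :: complex assume "l \<in> sphere 0 1"
    then show "cmod (tau p (w l)) = 1" using tau_eq1[OF p] ws by auto
  qed
qed

lemma disc_through:
  assumes p: "cmod p1 < 1" "cmod p2 < 1" "cmod p3 < 1" and E: "EE a1 a2 a3 p1 p2 p3 = 0"
  shows "\<exists>g1 g2 g3. gdisc p1 g1 \<and> gdisc p2 g2 \<and> gdisc p3 g3 \<and>
           (\<forall>l\<in>cball 0 1. EE a1 a2 a3 (g1 l) (g2 l) (g3 l) = 0)"
proof -
  define b1 where "b1 \<equiv> (1-p1*cnj p1)*(a1 - cnj a2*p3 - cnj a3*p2)"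
  define b2 where "b2 \<equiv> (1-p2*cnj p2)*(a2 - cnj a1*p3 - cnj a3*p1)"
  define b3 where "b3 \<equiv> (1-p3*cnj p3)*(a3 - cnj a1*p2 - cnj a2*p1)"
  obtain w1 w2 w3 where w: "gooddisc w1" "gooddisc w2" "gooddisc w3"
    and wE: "\<forall>l\<in>cball 0 1. EE b1 b2 b3 (w1 l) (w2 l) (w3 l) = 0"
    using origin_disc[of b1 b2 b3] by blast
  have zero: "EE a1 a2 a3 (tau p1 (w1 l)) (tau p2 (w2 l)) (tau p3 (w3 l)) = 0"
    if l: "l \<in> cball 0 1" for l
  proof -
    have d: "1 + cnj p1 * w1 l \<noteq> 0" "1 + cnj p2 * w2 l \<noteq> 0" "1 + cnj p3 * w3 l \<noteq> 0"
      using tau_den p gooddisc_le[OF _ l] w by auto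
    have "EE a1 a2 a3 (tau p1 (w1 l)) (tau p2 (w2 l)) (tau p3 (w3 l)) *
        (1 + cnj p1 * w1 l) * (1 + cnj p2 * w2 l) * (1 + cnj p3 * w3 l) = 0"
      using mob_identity[OF E d] wE l unfolding b1_def b2_def b3_def by simp
    then show ?thesis using d by simp
  qed
  show ?thesis
    by (rule exI[of _ "\<lambda>l. tau p1 (w1 l)"], rule exI[of _ "\<lambda>l. tau p2 (w2 l)"],
        rule exI[of _ "\<lambda>l. tau p3 (w3 l)"])
       (use gdisc_tau[OF p(1) w(1)] gdisc_tau[OF p(2) w(2)] gdisc_tau[OF p(3) w(3)] zero in auto)
qed



lemma mem_M: "(z1,z2,z3) \<in> M_alpha a1 a2 a3 \<longleftrightarrow>
   cmod z1 < 1 \<and> cmod z2 < 1 \<and> cmod z3 < 1 \<and> EE a1 a2 a3 z1 z2 z3 = 0"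
proof -
  have e: "EE a1 a2 a3 z1 z2 z3 = 0 \<longleftrightarrow> (a1*z1+a2*z2+a3*z3 = cnj a1*z2*z3 + cnj a2*z1*z3 + cnj a3*z1*z2)"
  proof -
    have "EE a1 a2 a3 z1 z2 z3 = (a1*z1+a2*z2+a3*z3) - (cnj a1*z2*z3 + cnj a2*z1*z3 + cnj a3*z1*z2)"
      by (simp add: EE_def algebra_simps)
    then show ?thesis by (simp only: right_minus_eq)
  qed
  show ?thesis unfolding M_alpha_def polydisc3_def e by simp
qed

lemma polydisc3_eq: "polydisc3 = ball 0 1 \<times> ball 0 1 \<times> ball 0 1"
  unfolding polydisc3_def by auto

lemma torus3_eq: "torus3 = sphere 0 1 \<times> sphere 0 1 \<times> sphere 0 1"
  unfolding torus3_def by auto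

lemma compact_torus3: "compact torus3"
  unfolding torus3_eq by (intro compact_Times compact_sphere)

lemma M_sub: "M_alpha a1 a2 a3 \<subseteq> polydisc3"
  unfolding M_alpha_def by auto

lemma closureM_sub: "closure (M_alpha a1 a2 a3) \<subseteq> cball 0 1 \<times> cball 0 1 \<times> cball 0 1"
proof (rule closure_minimal)
  show "M_alpha a1 a2 a3 \<subseteq> cball 0 1 \<times> cball 0 1 \<times> cball 0 1"
    using M_sub[of a1 a2 a3] unfolding polydisc3_eq by auto
  show "closed (cball (0::complex) 1 \<times> cball (0::complex) 1 \<times> cball (0::complex) 1)"
    by (intro closed_Times closed_cball)
qed

lemma comp_hol:
  assumes hs: "holomorphic_on_subvariety f M"
    and g: "g1 holomorphic_on S" "g2 holomorphic_on S" "g3 holomorphic_on S"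
    and S: "open S" and inM: "\<forall>l\<in>S. (g1 l, g2 l, g3 l) \<in> M"
  shows "(\<lambda>l. f (g1 l, g2 l, g3 l)) holomorphic_on S"
  unfolding holomorphic_on_def
proof
  fix l0 assume l0: "l0 \<in> S"
  have pM: "(g1 l0, g2 l0, g3 l0) \<in> M" using inM l0 by blast
  obtain U F where U: "open U" "(g1 l0, g2 l0, g3 l0) \<in> U" "U \<subseteq> polydisc3"
    and hF: "holomorphic3_on F U" and FM: "\<forall>q\<in>U \<inter> M. F q = f q"
    using hs[unfolded holomorphic_on_subvariety_def, rule_format, OF pM] by blast
  obtain D where D: "(F has_derivative D) (at (g1 l0, g2 l0, g3 l0))"
    and Dh: "\<forall>c v1 v2 v3. D (c * v1, c * v2, c * v3) = c * D (v1, v2, v3)"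
    using hF[unfolded holomorphic3_on_def, rule_format, OF U(2)] by blast
  have d1: "(g1 has_derivative (\<lambda>h. deriv g1 l0 * h)) (at l0)"
    using holomorphic_derivI[OF g(1) S l0] unfolding has_field_derivative_def by simp
  have d2: "(g2 has_derivative (\<lambda>h. deriv g2 l0 * h)) (at l0)"
    using holomorphic_derivI[OF g(2) S l0] unfolding has_field_derivative_def by simp
  have d3: "(g3 has_derivative (\<lambda>h. deriv g3 l0 * h)) (at l0)"
    using holomorphic_derivI[OF g(3) S l0] unfolding has_field_derivative_def by simp
  define G where "G = (\<lambda>l. (g1 l, g2 l, g3 l))"
  have dG: "(G has_derivative (\<lambda>h. (deriv g1 l0 * h, deriv g2 l0 * h, deriv g3 l0 * h))) (at l0)"
    unfolding G_def by (intro has_derivative_Pair d1 d2 d3)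
  have "(F \<circ> G has_derivative D \<circ> (\<lambda>h. (deriv g1 l0 * h, deriv g2 l0 * h, deriv g3 l0 * h))) (at l0)"
    by (rule diff_chain_at[OF dG]) (use D in \<open>simp add: G_def\<close>)
  moreover have "D \<circ> (\<lambda>h. (deriv g1 l0 * h, deriv g2 l0 * h, deriv g3 l0 * h))
      = (\<lambda>h. D (deriv g1 l0, deriv g2 l0, deriv g3 l0) * h)"
  proof
    fix h
    have "D (deriv g1 l0 * h, deriv g2 l0 * h, deriv g3 l0 * h) = D (h * deriv g1 l0, h * deriv g2 l0, h * deriv g3 l0)"
      by (simp add: mult.commute)
    also have "\<dots> = h * D (deriv g1 l0, deriv g2 l0, deriv g3 l0)" using Dh by blast
    finally show "(D \<circ> (\<lambda>h. (deriv g1 l0 * h, deriv g2 l0 * h, deriv g3 l0 * h))) h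
      = D (deriv g1 l0, deriv g2 l0, deriv g3 l0) * h" by (simp add: mult.commute)
  qed
  ultimately have dFG: "((F \<circ> G) has_derivative (\<lambda>h. D (deriv g1 l0, deriv g2 l0, deriv g3 l0) * h)) (at l0)"
    by simp
  have contG: "continuous_on S G" unfolding G_def
    by (intro continuous_on_Pair holomorphic_on_imp_continuous_on g)
  define V where "V = S \<inter> G -` U"
  have V: "open V" "l0 \<in> V" unfolding V_def
    using continuous_open_preimage[OF contG S U(1)] l0 U(2) G_def by auto
  have eq: "(F \<circ> G) l = f (g1 l, g2 l, g3 l)" if "l \<in> V" for l
    using that FM inM unfolding V_def G_def by auto
  have "((\<lambda>l. f (g1 l, g2 l, g3 l)) has_derivative (\<lambda>h. D (deriv g1 l0, deriv g2 l0, deriv g3 l0) * h)) (at l0)"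
    by (rule has_derivative_transform_within_open[OF dFG V]) (use eq in auto)
  then have "((\<lambda>l. f (g1 l, g2 l, g3 l)) has_field_derivative D (deriv g1 l0, deriv g2 l0, deriv g3 l0)) (at l0)"
    unfolding has_field_derivative_def by simp
  then show "(\<lambda>l. f (g1 l, g2 l, g3 l)) field_differentiable at l0 within S"
    using field_differentiable_at_within field_differentiable_def by blast
qed



lemma max_principle:
  assumes f: "f \<in> hol_cont_algebra (M_alpha a1 a2 a3)"
  shows "\<exists>x\<in>closure (M_alpha a1 a2 a3) \<inter> torus3.
           \<forall>y\<in>closure (M_alpha a1 a2 a3). cmod (f y) \<le> cmod (f x)"
proof -
  define M where "M = M_alpha a1 a2 a3"
  define K where "K = closure M"
  define S where "S = K \<inter> torus3"
  have contf: "continuous_on K f" and hs: "holomorphic_on_subvariety f M"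
    using f unfolding hol_cont_algebra_def K_def M_def by auto
  have disc: "\<exists>G. G 0 = p \<and> continuous_on (cball 0 1) G \<and> G ` cball 0 1 \<subseteq> K \<and>
      G ` sphere 0 1 \<subseteq> S \<and> (\<lambda>l. f (G l)) holomorphic_on ball 0 1" if pM: "p \<in> M" for p
  proof -
    obtain p1 p2 p3 where pp: "p = (p1, p2, p3)" by (cases p) auto
    have hp: "cmod p1 < 1" "cmod p2 < 1" "cmod p3 < 1" "EE a1 a2 a3 p1 p2 p3 = 0"
      using pM unfolding pp M_def mem_M by auto
    obtain g1 g2 g3 where g: "gdisc p1 g1" "gdisc p2 g2" "gdisc p3 g3"
      and gE: "\<forall>l\<in>cball 0 1. EE a1 a2 a3 (g1 l) (g2 l) (g3 l) = 0"
      using disc_through[OF hp] by blast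
    define G where "G = (\<lambda>l. (g1 l, g2 l, g3 l))"
    have inM: "\<forall>l\<in>ball 0 1. (g1 l, g2 l, g3 l) \<in> M"
      using g gE unfolding gdisc_def M_def mem_M by auto
    have contG: "continuous_on (cball 0 1) G"
      using g unfolding G_def gdisc_def by (intro continuous_on_Pair) auto
    have GK: "G ` cball 0 1 \<subseteq> K"
    proof -
      have "G ` closure (ball 0 1) \<subseteq> K"
        by (rule image_closure_subset) (use contG inM in \<open>auto simp: G_def K_def intro: closure_subset[THEN subsetD]\<close>)
      then show ?thesis by simp
    qed
    have GS: "G ` sphere 0 1 \<subseteq> S"
    proof
      fix x assume "x \<in> G ` sphere 0 1"
      then obtain l where l: "l \<in> sphere 0 1" "x = G l" by auto
      have "x \<in> K" using GK l by auto
      moreover have "x \<in> torus3" using g l unfolding gdisc_def torus3_def G_def by auto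
      ultimately show "x \<in> S" unfolding S_def by auto
    qed
    have hol: "(\<lambda>l. f (G l)) holomorphic_on ball 0 1"
      unfolding G_def by (rule comp_hol[OF hs]) (use g inM in \<open>auto simp: gdisc_def\<close>)
    have "G 0 = p" using g unfolding G_def gdisc_def pp by auto
    then show ?thesis using contG GK GS hol by blast
  qed
  have M0: "(0,0,0) \<in> M" unfolding M_def mem_M EE_def by simp
  from disc[OF M0] obtain G0 where G0all: "G0 0 = (0,0,0) \<and> continuous_on (cball 0 1) G0 \<and> G0 ` cball 0 1 \<subseteq> K \<and>
      G0 ` sphere 0 1 \<subseteq> S \<and> (\<lambda>l. f (G0 l)) holomorphic_on ball 0 1" ..
  note G0 = conjunct1[OF conjunct2[OF conjunct2[OF conjunct2[OF G0all]]]]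
  have "(1::complex) \<in> sphere 0 1" by simp
  then have Sne: "S \<noteq> {}" using G0 by blast
  have Scomp: "compact S" unfolding S_def K_def
    using compact_Int_closed[OF compact_torus3 closed_closure, of M] by (simp add: Int_commute)
  have contS: "continuous_on S (\<lambda>y. cmod (f y))"
    by (intro continuous_on_norm continuous_on_subset[OF contf]) (auto simp: S_def)
  obtain x where x: "x \<in> S" and xmax: "\<forall>y\<in>S. cmod (f y) \<le> cmod (f x)"
    using continuous_attains_sup[OF Scomp Sne contS] by blast
  have onM: "cmod (f p) \<le> cmod (f x)" if pM: "p \<in> M" for p
  proof -
    from disc[OF pM] obtain G where Gall: "G 0 = p \<and> continuous_on (cball 0 1) G \<and> G ` cball 0 1 \<subseteq> K \<and>
      G ` sphere 0 1 \<subseteq> S \<and> (\<lambda>l. f (G l)) holomorphic_on ball 0 1" ..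
    note G = conjunct1[OF Gall] conjunct1[OF conjunct2[OF Gall]] conjunct1[OF conjunct2[OF conjunct2[OF Gall]]]
      conjunct1[OF conjunct2[OF conjunct2[OF conjunct2[OF Gall]]]] conjunct2[OF conjunct2[OF conjunct2[OF conjunct2[OF Gall]]]]
    have cont: "continuous_on (closure (ball 0 1)) (\<lambda>l. f (G l))"
      using continuous_on_compose[OF G(2) continuous_on_subset[OF contf G(3)]]
      by (simp add: o_def)
    have "cmod (f (G 0)) \<le> cmod (f x)"
    proof (rule maximum_modulus_frontier[of "\<lambda>l. f (G l)" "ball 0 1" "cmod (f x)" 0])
      show "(\<lambda>l. f (G l)) holomorphic_on interior (ball 0 1)" using G(5) by simp
      show "continuous_on (closure (ball 0 1)) (\<lambda>l. f (G l))" by (rule cont)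
      show "bounded (ball (0::complex) 1)" by simp
      show "(0::complex) \<in> ball 0 1" by simp
    next
      fix z :: complex assume "z \<in> frontier (ball 0 1)"
      then have "G z \<in> S" using G(4) by auto
      then show "cmod (f (G z)) \<le> cmod (f x)" using xmax by blast
    qed
    then show ?thesis using G(1) by simp
  qed
  have "K \<subseteq> K \<inter> (\<lambda>y. cmod (f y)) -` {..cmod (f x)}"
    unfolding K_def
  proof (rule closure_minimal)
    show "M \<subseteq> closure M \<inter> (\<lambda>y. cmod (f y)) -` {..cmod (f x)}"
      using onM closure_subset[of M] by blast
    show "closed (closure M \<inter> (\<lambda>y. cmod (f y)) -` {..cmod (f x)})"
      by (rule continuous_closed_preimage) (use contf in \<open>auto simp: K_def intro: continuous_on_norm\<close>)
  qed
  then show ?thesis using x unfolding S_def K_def M_def by auto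
qed



lemma re_le1: "cmod u \<le> 1 \<Longrightarrow> Re u \<le> 1"
  using abs_Re_le_cmod[of u] by linarith

lemma re_eq1: assumes "cmod u \<le> 1" "Re u = 1" shows "u = 1"
proof -
  have "(Re u)^2 + (Im u)^2 \<le> 1" using assms(1) cmod_power2[of u]
    by (metis norm_ge_zero power_le_one)
  then have "Im u = 0" using assms(2) by simp
  then show ?thesis using assms(2) complex_eq_iff by auto
qed

lemma peak_eq:
  assumes x: "cmod x1 \<le> 1" "cmod x2 \<le> 1" "cmod x3 \<le> 1"
    and q: "cmod q1 = 1" "cmod q2 = 1" "cmod q3 = 1"
    and ge: "1 \<le> cmod ((3 + cnj q1 * x1 + cnj q2 * x2 + cnj q3 * x3) / 6)"
  shows "x1 = q1 \<and> x2 = q2 \<and> x3 = q3"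
proof -
  define u1 where "u1 = cnj q1 * x1"
  define u2 where "u2 = cnj q2 * x2"
  define u3 where "u3 = cnj q3 * x3"
  have nu: "cmod u1 \<le> 1" "cmod u2 \<le> 1" "cmod u3 \<le> 1"
    unfolding u1_def u2_def u3_def using x q by (simp_all add: norm_mult)
  define s where "s = u1 + u2 + u3"
  have ns: "cmod s \<le> 3" unfolding s_def
    using norm_triangle_ineq[of "u1 + u2" u3] norm_triangle_ineq[of u1 u2] nu by linarith
  have "6 \<le> cmod (3 + s)" using ge unfolding s_def u1_def u2_def u3_def
    by (simp add: norm_divide add.assoc)
  then have "6^2 \<le> (cmod (3 + s))^2" by (intro power_mono) auto
  then have "36 \<le> (cmod (3 + s))^2" by simp
  moreover have "(cmod (3 + s))^2 = (3 + Re s)^2 + (Im s)^2" by (simp add: cmod_power2)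
  moreover have "(Re s)^2 + (Im s)^2 \<le> 9"
  proof -
    have "(cmod s)^2 \<le> 3^2" using ns by (intro power_mono) auto
    then show ?thesis by (simp add: cmod_power2)
  qed
  ultimately have "Re s \<ge> 3" by (simp add: power2_eq_square algebra_simps)
  then have r: "Re u1 = 1" "Re u2 = 1" "Re u3 = 1"
    using re_le1[OF nu(1)] re_le1[OF nu(2)] re_le1[OF nu(3)] unfolding s_def by auto
  have "u1 = 1" "u2 = 1" "u3 = 1" using re_eq1 nu r by auto
  moreover have "q1 * cnj q1 = 1" "q2 * cnj q2 = 1" "q3 * cnj q3 = 1" using q unit_cnj by auto
  ultimately have e: "cnj q1 * x1 = 1" "cnj q2 * x2 = 1" "cnj q3 * x3 = 1" "q1 * cnj q1 = 1" "q2 * cnj q2 = 1" "q3 * cnj q3 = 1"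
    unfolding u1_def u2_def u3_def by auto
  have "x1 = q1" using e(1,4) by (metis mult.assoc mult.left_neutral mult.right_neutral)
  moreover have "x2 = q2" using e(2,5) by (metis mult.assoc mult.left_neutral mult.right_neutral)
  moreover have "x3 = q3" using e(3,6) by (metis mult.assoc mult.left_neutral mult.right_neutral)
  ultimately show ?thesis by simp
qed



definition peakf :: "complex \<Rightarrow> complex \<Rightarrow> complex \<Rightarrow> c3 \<Rightarrow> complex" where
  "peakf q1 q2 q3 z = (3 + cnj q1 * fst z + cnj q2 * fst (snd z) + cnj q3 * snd (snd z)) / 6"

lemma peakf_deriv:
  "(peakf q1 q2 q3 has_derivative (\<lambda>v. (cnj q1 * fst v + cnj q2 * fst (snd v) + cnj q3 * snd (snd v)) / 6)) (at z)"
  unfolding peakf_def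
  by (auto intro!: derivative_eq_intros simp: field_simps)

lemma peakf_alg: "peakf q1 q2 q3 \<in> hol_cont_algebra (M_alpha a1 a2 a3)"
  unfolding hol_cont_algebra_def
proof (intro CollectI conjI)
  show "continuous_on (closure (M_alpha a1 a2 a3)) (peakf q1 q2 q3)" unfolding peakf_def
    by (intro continuous_intros) auto
  have h3: "holomorphic3_on (peakf q1 q2 q3) polydisc3"
    unfolding holomorphic3_on_def
    by (intro ballI exI[of _ "\<lambda>v. (cnj q1 * fst v + cnj q2 * fst (snd v) + cnj q3 * snd (snd v)) / 6"] conjI peakf_deriv)
       (simp add: algebra_simps)
  have op: "open polydisc3" unfolding polydisc3_eq by (intro open_Times open_ball)
  show "holomorphic_on_subvariety (peakf q1 q2 q3) (M_alpha a1 a2 a3)"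
    unfolding holomorphic_on_subvariety_def
  proof
    fix p assume "p \<in> M_alpha a1 a2 a3"
    then have "p \<in> polydisc3" using M_sub by blast
    then show "\<exists>U F. open U \<and> p \<in> U \<and> U \<subseteq> polydisc3 \<and> holomorphic3_on F U \<and>
      (\<forall>q\<in>U \<inter> M_alpha a1 a2 a3. F q = peakf q1 q2 q3 q)"
      using op h3 by blast
  qed
qed

theorem proposition1:
  fixes a1 a2 a3 :: complex
  assumes "(a1, a2, a3) \<noteq> (0, 0, 0)"
    and "triangle_ineq a1 a2 a3"
  shows "is_shilov_boundary (hol_cont_algebra (M_alpha a1 a2 a3)) (closure (M_alpha a1 a2 a3))
           (closure (M_alpha a1 a2 a3) \<inter> torus3)"
  unfolding is_shilov_boundary_def is_closed_boundary_def
proof (intro conjI allI impI ballI)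
  show "closure (M_alpha a1 a2 a3) \<inter> torus3 \<subseteq> closure (M_alpha a1 a2 a3)" by blast
  show "closed (closure (M_alpha a1 a2 a3) \<inter> torus3)"
    by (intro closed_Int closed_closure compact_imp_closed compact_torus3)
next
  fix f assume "f \<in> hol_cont_algebra (M_alpha a1 a2 a3)"
  then show "\<exists>x\<in>closure (M_alpha a1 a2 a3) \<inter> torus3.
           \<forall>y\<in>closure (M_alpha a1 a2 a3). cmod (f y) \<le> cmod (f x)"
    by (rule max_principle)
next
  fix G'
  assume G': "G' \<subseteq> closure (M_alpha a1 a2 a3) \<and> closed G' \<and>
    (\<forall>f\<in>hol_cont_algebra (M_alpha a1 a2 a3). \<exists>x\<in>G'. \<forall>y\<in>closure (M_alpha a1 a2 a3). cmod (f y) \<le> cmod (f x))"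
  show "closure (M_alpha a1 a2 a3) \<inter> torus3 \<subseteq> G'"
  proof
  fix q assume qG: "q \<in> closure (M_alpha a1 a2 a3) \<inter> torus3"
  obtain q1 q2 q3 where qq: "q = (q1, q2, q3)" by (cases q) auto
  have nq: "cmod q1 = 1" "cmod q2 = 1" "cmod q3 = 1" using qG unfolding qq torus3_def by auto
  obtain x where xG: "x \<in> G'" and xm: "\<forall>y\<in>closure (M_alpha a1 a2 a3). cmod (peakf q1 q2 q3 y) \<le> cmod (peakf q1 q2 q3 x)"
    using G' peakf_alg[of q1 q2 q3 a1 a2 a3] by blast
  obtain x1 x2 x3 where xx: "x = (x1, x2, x3)" by (cases x) auto
  have "x \<in> closure (M_alpha a1 a2 a3)" using xG G' by blast
  then have nx: "cmod x1 \<le> 1" "cmod x2 \<le> 1" "cmod x3 \<le> 1"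
    using closureM_sub[of a1 a2 a3] unfolding xx by auto
  have "peakf q1 q2 q3 q = 1"
  proof -
    have "cnj q1 * q1 = 1" "cnj q2 * q2 = 1" "cnj q3 * q3 = 1"
      using unit_cnj[OF nq(1)] unit_cnj[OF nq(2)] unit_cnj[OF nq(3)] by (simp_all add: mult.commute)
    then show ?thesis unfolding peakf_def qq by simp
  qed
  then have "1 \<le> cmod (peakf q1 q2 q3 x)" using xm qG by fastforce
  then have "x1 = q1 \<and> x2 = q2 \<and> x3 = q3"
    by (intro peak_eq[OF nx nq]) (simp add: peakf_def xx)
  then show "q \<in> G'" using xG xx qq by simp
  qed
qed


end
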